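(* Let $R$ be a ring, $G$ a group and $A$ an $RG$-module. Then $\mathbf{Coc}_{R\text{-mmx}}(G) = \{x \in G \mid A/C_A(x) \text{ is a minimax } R\text{-module}\}$ is a normal subgroup of $G$.
   Context: An $R$-module is minimax if it has a finite series of submodules whose factors are each noetherian or artinian. For $x \in G$, $C_A(x) = \{a\in A \mid ax = a\}$. *)

theory Defs
  imports "HOL-Algebra.Algebra"
begin

text \<open>Left R-module over an arbitrary (not necessarily commutative) ring R.
  The library locale module requires a commutative ring, so we use its axioms
  together with ring R.\<close>
definition rmodule :: "('r, 'c) ring_scheme \<Rightarrow> ('r, 'm, 'd) module_scheme \<Rightarrow> bool" where
  "rmodule R M \<longleftrightarrow> ring R \<and> abelian_group M \<and> module_axioms R M"

definition quot_module :: "('r, 'm, 'd) module_scheme \<Rightarrow> 'm set \<Rightarrow> ('r, 'm set) module" where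
  "quot_module M N =
     \<lparr> carrier = a_rcosets\<^bsub>M\<^esub> N,
       monoid.mult = (\<lambda>_ _. N), one = N,
       ring.zero = N,
       ring.add = (\<lambda>U V. U <+>\<^bsub>M\<^esub> V),
       module.smult = (\<lambda>r U. N <+>\<^bsub>M\<^esub> ((\<lambda>u. r \<odot>\<^bsub>M\<^esub> u) ` U)) \<rparr>"

definition noetherian_module :: "('r, 'c) ring_scheme \<Rightarrow> ('r, 'm, 'd) module_scheme \<Rightarrow> bool" where
  "noetherian_module R M \<longleftrightarrow>
     (\<forall>f :: nat \<Rightarrow> 'm set. (\<forall>n. submodule (f n) R M \<and> f n \<subseteq> f (Suc n))
        \<longrightarrow> (\<exists>m. \<forall>n\<ge>m. f n = f m))"

definition artinian_module :: "('r, 'c) ring_scheme \<Rightarrow> ('r, 'm, 'd) module_scheme \<Rightarrow> bool" where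
  "artinian_module R M \<longleftrightarrow>
     (\<forall>f :: nat \<Rightarrow> 'm set. (\<forall>n. submodule (f n) R M \<and> f (Suc n) \<subseteq> f n)
        \<longrightarrow> (\<exists>m. \<forall>n\<ge>m. f n = f m))"

definition minimax_module :: "('r, 'c) ring_scheme \<Rightarrow> ('r, 'm, 'd) module_scheme \<Rightarrow> bool" where
  "minimax_module R M \<longleftrightarrow>
     (\<exists>(n::nat) (S :: nat \<Rightarrow> 'm set).
        S 0 = {\<zero>\<^bsub>M\<^esub>} \<and> S n = carrier M \<and>
        (\<forall>i\<le>n. submodule (S i) R M) \<and>
        (\<forall>i<n. S i \<subseteq> S (Suc i) \<and>
           (noetherian_module R (quot_module (M\<lparr>carrier := S (Suc i)\<rparr>) (S i)) \<or>
            artinian_module R (quot_module (M\<lparr>carrier := S (Suc i)\<rparr>) (S i)))))"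

definition RG_module :: "('r, 'c) ring_scheme \<Rightarrow> ('g, 'e) monoid_scheme \<Rightarrow>
    ('r, 'm, 'd) module_scheme \<Rightarrow> ('m \<Rightarrow> 'g \<Rightarrow> 'm) \<Rightarrow> bool" where
  "RG_module R G A act \<longleftrightarrow> rmodule R A \<and> group G \<and>
     (\<forall>x\<in>carrier G. \<forall>a\<in>carrier A. act a x \<in> carrier A) \<and>
     (\<forall>x\<in>carrier G. \<forall>a\<in>carrier A. \<forall>b\<in>carrier A. act (a \<oplus>\<^bsub>A\<^esub> b) x = act a x \<oplus>\<^bsub>A\<^esub> act b x) \<and>
     (\<forall>x\<in>carrier G. \<forall>r\<in>carrier R. \<forall>a\<in>carrier A. act (r \<odot>\<^bsub>A\<^esub> a) x = r \<odot>\<^bsub>A\<^esub> act a x) \<and>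
     (\<forall>a\<in>carrier A. act a \<one>\<^bsub>G\<^esub> = a) \<and>
     (\<forall>x\<in>carrier G. \<forall>y\<in>carrier G. \<forall>a\<in>carrier A. act (act a x) y = act a (x \<otimes>\<^bsub>G\<^esub> y))"

definition centr_mod :: "('r, 'm, 'd) module_scheme \<Rightarrow> ('m \<Rightarrow> 'g \<Rightarrow> 'm) \<Rightarrow> 'g \<Rightarrow> 'm set" where
  "centr_mod A act x = {a \<in> carrier A. act a x = a}"

definition Coc_mmx :: "('r, 'c) ring_scheme \<Rightarrow> ('g, 'e) monoid_scheme \<Rightarrow>
    ('r, 'm, 'd) module_scheme \<Rightarrow> ('m \<Rightarrow> 'g \<Rightarrow> 'm) \<Rightarrow> 'g set" where
  "Coc_mmx R G A act = {x \<in> carrier G. minimax_module R (quot_module A (centr_mod A act x))}"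

end

theory Submission
  imports Defs
begin

lemma submodule_iff:
  "submodule H R M \<longleftrightarrow> H \<subseteq> carrier M \<and> \<zero>\<^bsub>M\<^esub> \<in> H \<and> (\<forall>a\<in>H. \<ominus>\<^bsub>M\<^esub> a \<in> H)
     \<and> (\<forall>a\<in>H. \<forall>b\<in>H. a \<oplus>\<^bsub>M\<^esub> b \<in> H) \<and> (\<forall>r\<in>carrier R. \<forall>a\<in>H. r \<odot>\<^bsub>M\<^esub> a \<in> H)"
  unfolding submodule_def submodule_axioms_def subgroup_def a_inv_def
  by auto

definition cos_img :: "('r, 'm, 'd) module_scheme \<Rightarrow> 'm set \<Rightarrow> 'm set \<Rightarrow> 'm set set" where
  "cos_img N L H = (\<lambda>h. L +>\<^bsub>N\<^esub> h) ` H"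

definition acc :: "('a set \<Rightarrow> bool) \<Rightarrow> bool" where
  "acc P \<longleftrightarrow> (\<forall>f::nat \<Rightarrow> 'a set. (\<forall>n. P (f n) \<and> f n \<subseteq> f (Suc n)) \<longrightarrow> (\<exists>m. \<forall>n\<ge>m. f n = f m))"

definition dcc :: "('a set \<Rightarrow> bool) \<Rightarrow> bool" where
  "dcc P \<longleftrightarrow> (\<forall>f::nat \<Rightarrow> 'a set. (\<forall>n. P (f n) \<and> f (Suc n) \<subseteq> f n) \<longrightarrow> (\<exists>m. \<forall>n\<ge>m. f n = f m))"

lemma noeth_acc: "noetherian_module R M \<longleftrightarrow> acc (\<lambda>H. submodule H R M)"
  unfolding noetherian_module_def acc_def by simp

lemma art_dcc: "artinian_module R M \<longleftrightarrow> dcc (\<lambda>H. submodule H R M)"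
  unfolding artinian_module_def dcc_def by simp

lemma acc_transfer:
  assumes "acc P2" and "\<And>H. P1 H \<Longrightarrow> P2 (g H)"
    and "\<And>H K. P1 H \<Longrightarrow> P1 K \<Longrightarrow> H \<subseteq> K \<Longrightarrow> g H \<subseteq> g K"
    and "\<And>H K. P1 H \<Longrightarrow> P1 K \<Longrightarrow> g H = g K \<Longrightarrow> H = K"
  shows "acc P1"
  unfolding acc_def
proof (intro allI impI)
  fix f :: "nat \<Rightarrow> _" assume f: "\<forall>n. P1 (f n) \<and> f n \<subseteq> f (Suc n)"
  let ?h = "\<lambda>n. g (f n)"
  have h: "\<forall>n. P2 (?h n) \<and> ?h n \<subseteq> ?h (Suc n)" using f assms(2,3) by simp
  have "(\<forall>n. P2 (?h n) \<and> ?h n \<subseteq> ?h (Suc n)) \<longrightarrow> (\<exists>m. \<forall>n\<ge>m. ?h n = ?h m)"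
    using assms(1)[unfolded acc_def, THEN spec, of ?h] .
  with h obtain m where m: "\<forall>n\<ge>m. g (f n) = g (f m)" by blast
  have "\<forall>n\<ge>m. f n = f m"
  proof (intro allI impI)
    fix n assume "n \<ge> m"
    then have "g (f n) = g (f m)" using m by blast
    moreover have "P1 (f n)" "P1 (f m)" using f by blast+
    ultimately show "f n = f m" using assms(4) by blast
  qed
  then show "\<exists>m. \<forall>n\<ge>m. f n = f m" by blast
qed

lemma dcc_transfer:
  assumes "dcc P2" and "\<And>H. P1 H \<Longrightarrow> P2 (g H)"
    and "\<And>H K. P1 H \<Longrightarrow> P1 K \<Longrightarrow> H \<subseteq> K \<Longrightarrow> g H \<subseteq> g K"
    and "\<And>H K. P1 H \<Longrightarrow> P1 K \<Longrightarrow> g H = g K \<Longrightarrow> H = K"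
  shows "dcc P1"
  unfolding dcc_def
proof (intro allI impI)
  fix f :: "nat \<Rightarrow> _" assume f: "\<forall>n. P1 (f n) \<and> f (Suc n) \<subseteq> f n"
  let ?h = "\<lambda>n. g (f n)"
  have h: "\<forall>n. P2 (?h n) \<and> ?h (Suc n) \<subseteq> ?h n" using f assms(2,3) by simp
  have "(\<forall>n. P2 (?h n) \<and> ?h (Suc n) \<subseteq> ?h n) \<longrightarrow> (\<exists>m. \<forall>n\<ge>m. ?h n = ?h m)"
    using assms(1)[unfolded dcc_def, THEN spec, of ?h] .
  with h obtain m where m: "\<forall>n\<ge>m. g (f n) = g (f m)" by blast
  have "\<forall>n\<ge>m. f n = f m"
  proof (intro allI impI)
    fix n assume "n \<ge> m"
    then have "g (f n) = g (f m)" using m by blast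
    moreover have "P1 (f n)" "P1 (f m)" using f by blast+
    ultimately show "f n = f m" using assms(4) by blast
  qed
  then show "\<exists>m. \<forall>n\<ge>m. f n = f m" by blast
qed

definition intv :: "('r, 'c) ring_scheme \<Rightarrow> ('r, 'm, 'd) module_scheme \<Rightarrow> 'm set \<Rightarrow> 'm set \<Rightarrow> 'm set \<Rightarrow> bool" where
  "intv R M Lo Hi = (\<lambda>H. submodule H R M \<and> Lo \<subseteq> H \<and> H \<subseteq> Hi)"

definition rel_mmx :: "('r, 'c) ring_scheme \<Rightarrow> ('r, 'm, 'd) module_scheme \<Rightarrow> 'm set \<Rightarrow> bool" where
  "rel_mmx R M C \<longleftrightarrow> (\<exists>(n::nat) (T :: nat \<Rightarrow> 'm set). T 0 = C \<and> T n = carrier M \<and>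
     (\<forall>i\<le>n. submodule (T i) R M) \<and>
     (\<forall>i<n. T i \<subseteq> T (Suc i) \<and> (acc (intv R M (T i) (T (Suc i))) \<or> dcc (intv R M (T i) (T (Suc i))))))"

definition msum :: "('r, 'm, 'd) module_scheme \<Rightarrow> 'm set \<Rightarrow> 'm set \<Rightarrow> 'm set" where
  "msum M H K = {h \<oplus>\<^bsub>M\<^esub> k | h k. h \<in> H \<and> k \<in> K}"

definition lin :: "('r, 'c) ring_scheme \<Rightarrow> ('r, 'm, 'd) module_scheme \<Rightarrow> ('m \<Rightarrow> 'm) \<Rightarrow> bool" where
  "lin R M \<phi> \<longleftrightarrow> (\<forall>a\<in>carrier M. \<phi> a \<in> carrier M) \<and>
     (\<forall>a\<in>carrier M. \<forall>b\<in>carrier M. \<phi> (a \<oplus>\<^bsub>M\<^esub> b) = \<phi> a \<oplus>\<^bsub>M\<^esub> \<phi> b) \<and>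
     (\<forall>r\<in>carrier R. \<forall>a\<in>carrier M. \<phi> (r \<odot>\<^bsub>M\<^esub> a) = r \<odot>\<^bsub>M\<^esub> \<phi> a)"

locale rmod = R: ring R + M: abelian_group M for R :: "('r,'c) ring_scheme" and M :: "('r,'m,'d) module_scheme" +
  assumes smult_closed [simp, intro]:
      "\<lbrakk>a \<in> carrier R; x \<in> carrier M\<rbrakk> \<Longrightarrow> a \<odot>\<^bsub>M\<^esub> x \<in> carrier M"
    and smult_l_distr:
      "\<lbrakk>a \<in> carrier R; b \<in> carrier R; x \<in> carrier M\<rbrakk> \<Longrightarrow>
      (a \<oplus>\<^bsub>R\<^esub> b) \<odot>\<^bsub>M\<^esub> x = a \<odot>\<^bsub>M\<^esub> x \<oplus>\<^bsub>M\<^esub> b \<odot>\<^bsub>M\<^esub> x"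
    and smult_r_distr:
      "\<lbrakk>a \<in> carrier R; x \<in> carrier M; y \<in> carrier M\<rbrakk> \<Longrightarrow>
      a \<odot>\<^bsub>M\<^esub> (x \<oplus>\<^bsub>M\<^esub> y) = a \<odot>\<^bsub>M\<^esub> x \<oplus>\<^bsub>M\<^esub> a \<odot>\<^bsub>M\<^esub> y"
    and smult_assoc1:
      "\<lbrakk>a \<in> carrier R; b \<in> carrier R; x \<in> carrier M\<rbrakk> \<Longrightarrow>
      (a \<otimes>\<^bsub>R\<^esub> b) \<odot>\<^bsub>M\<^esub> x = a \<odot>\<^bsub>M\<^esub> (b \<odot>\<^bsub>M\<^esub> x)"
    and smult_one [simp]:
      "x \<in> carrier M \<Longrightarrow> \<one>\<^bsub>R\<^esub> \<odot>\<^bsub>M\<^esub> x = x"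

lemma rmodule_rmod: "rmodule R M \<Longrightarrow> rmod R M"
  unfolding rmodule_def module_axioms_def rmod_def rmod_axioms_def by auto

context rmod begin

lemma smult_zero [simp]: "r \<in> carrier R \<Longrightarrow> r \<odot>\<^bsub>M\<^esub> \<zero>\<^bsub>M\<^esub> = \<zero>\<^bsub>M\<^esub>"
proof -
  assume r: "r \<in> carrier R"
  have "r \<odot>\<^bsub>M\<^esub> \<zero>\<^bsub>M\<^esub> = r \<odot>\<^bsub>M\<^esub> \<zero>\<^bsub>M\<^esub> \<oplus>\<^bsub>M\<^esub> r \<odot>\<^bsub>M\<^esub> \<zero>\<^bsub>M\<^esub>"
    using smult_r_distr[OF r, of "\<zero>\<^bsub>M\<^esub>" "\<zero>\<^bsub>M\<^esub>"] by simp
  then show ?thesis using r by (simp add: M.add.l_cancel_one' M.add.r_cancel_one')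
qed

lemma smult_minus: "r \<in> carrier R \<Longrightarrow> a \<in> carrier M \<Longrightarrow> r \<odot>\<^bsub>M\<^esub> (\<ominus>\<^bsub>M\<^esub> a) = \<ominus>\<^bsub>M\<^esub> (r \<odot>\<^bsub>M\<^esub> a)"
proof -
  assume r: "r \<in> carrier R" and a: "a \<in> carrier M"
  have "r \<odot>\<^bsub>M\<^esub> (\<ominus>\<^bsub>M\<^esub> a) \<oplus>\<^bsub>M\<^esub> r \<odot>\<^bsub>M\<^esub> a = \<zero>\<^bsub>M\<^esub>"
    using smult_r_distr[OF r, of "\<ominus>\<^bsub>M\<^esub> a" a] r a by (simp add: M.l_neg)
  then show ?thesis using r a by (simp add: M.minus_equality)
qed

lemma sub_restrict_rmod:
  assumes U: "submodule U R M"
  shows "rmod R (M\<lparr>carrier := U\<rparr>)"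
    and "\<And>a. a \<in> U \<Longrightarrow> \<ominus>\<^bsub>M\<lparr>carrier := U\<rparr>\<^esub> a = \<ominus>\<^bsub>M\<^esub> a"
proof -
  have Us: "U \<subseteq> carrier M" "\<zero>\<^bsub>M\<^esub> \<in> U" "\<And>a. a\<in>U \<Longrightarrow> \<ominus>\<^bsub>M\<^esub> a \<in> U"
     "\<And>a b. a\<in>U \<Longrightarrow> b\<in>U \<Longrightarrow> a \<oplus>\<^bsub>M\<^esub> b \<in> U" "\<And>r a. r\<in>carrier R \<Longrightarrow> a\<in>U \<Longrightarrow> r \<odot>\<^bsub>M\<^esub> a \<in> U"
    using U unfolding submodule_iff by auto
  have ag: "abelian_group (M\<lparr>carrier := U\<rparr>)"
  proof (rule abelian_groupI, goal_cases)
    case 6 then show ?case using Us(1,3) by (intro bexI[of _ "\<ominus>\<^bsub>M\<^esub> _"]) (auto intro: M.l_neg)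
  next
    case 1 then show ?case using Us(4) by simp
  next
    case 2 then show ?case using Us(2) by simp
  next
    case (3 x y z) then show ?case using Us(1) M.a_assoc[of x y z] by (simp add: subset_iff)
  next
    case (4 x y) then show ?case using Us(1) M.a_comm[of x y] by (simp add: subset_iff)
  next
    case (5 x) then show ?case using Us(1) M.l_zero[of x] by (simp add: subset_iff)
  qed
  show "rmod R (M\<lparr>carrier := U\<rparr>)"
    unfolding rmod_def rmod_axioms_def
    using ag Us R.ring_axioms by (auto intro: smult_l_distr smult_r_distr smult_assoc1)
  show "\<ominus>\<^bsub>M\<lparr>carrier := U\<rparr>\<^esub> a = \<ominus>\<^bsub>M\<^esub> a" if "a \<in> U" for a
    using abelian_group.minus_equality[OF ag, of "\<ominus>\<^bsub>M\<^esub> a" a] that Us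
    by (auto intro: M.l_neg)
qed

lemma submodule_restrict_iff:
  assumes U: "submodule U R M"
  shows "submodule H R (M\<lparr>carrier := U\<rparr>) \<longleftrightarrow> submodule H R M \<and> H \<subseteq> U"
proof -
  have "U \<subseteq> carrier M" using U unfolding submodule_iff by auto
  show ?thesis
  proof
    assume H: "submodule H R (M\<lparr>carrier := U\<rparr>)"
    then have HU: "H \<subseteq> U" unfolding submodule_iff by simp
    then have "\<And>a. a \<in> H \<Longrightarrow> \<ominus>\<^bsub>M\<lparr>carrier := U\<rparr>\<^esub> a = \<ominus>\<^bsub>M\<^esub> a"
      using sub_restrict_rmod(2)[OF U] by blast
    with H HU \<open>U \<subseteq> carrier M\<close> show "submodule H R M \<and> H \<subseteq> U" unfolding submodule_iff by auto
  next
    assume H: "submodule H R M \<and> H \<subseteq> U"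
    then have "\<And>a. a \<in> H \<Longrightarrow> \<ominus>\<^bsub>M\<lparr>carrier := U\<rparr>\<^esub> a = \<ominus>\<^bsub>M\<^esub> a"
      using sub_restrict_rmod(2)[OF U] by blast
    with H show "submodule H R (M\<lparr>carrier := U\<rparr>)" unfolding submodule_iff by auto
  qed
qed


lemma submodule_abelian_subgroup:
  assumes L: "submodule L R M" shows "abelian_subgroup L M"
  using L unfolding submodule_def
  by (intro abelian_subgroupI3 additive_subgroupI) (auto simp: M.abelian_group_axioms)

lemma quot_simps:
  "carrier (quot_module N L) = A_RCOSETS N L"
  "ring.add (quot_module N L) = (\<lambda>U V. U <+>\<^bsub>N\<^esub> V)"
  "ring.zero (quot_module N L) = L"
  "module.smult (quot_module N L) = (\<lambda>r U. L <+>\<^bsub>N\<^esub> ((\<lambda>u. r \<odot>\<^bsub>N\<^esub> u) ` U))"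
  by (simp_all add: quot_module_def)

lemma coset_smult:
  assumes L: "submodule L R M" and x: "x \<in> carrier M" and r: "r \<in> carrier R"
  shows "L <+>\<^bsub>M\<^esub> ((\<lambda>u. r \<odot>\<^bsub>M\<^esub> u) ` (L +>\<^bsub>M\<^esub> x)) = L +>\<^bsub>M\<^esub> (r \<odot>\<^bsub>M\<^esub> x)"
proof -
  have Ls: "L \<subseteq> carrier M" "\<zero>\<^bsub>M\<^esub> \<in> L"
     "\<And>a b. a\<in>L \<Longrightarrow> b\<in>L \<Longrightarrow> a \<oplus>\<^bsub>M\<^esub> b \<in> L" "\<And>r a. r\<in>carrier R \<Longrightarrow> a\<in>L \<Longrightarrow> r \<odot>\<^bsub>M\<^esub> a \<in> L"
    using L unfolding submodule_iff by auto
  have c: "\<And>a. a \<in> L \<Longrightarrow> a \<in> carrier M" using Ls(1) by blast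
  show ?thesis
  proof (intro equalityI subsetI)
    fix z assume "z \<in> L <+>\<^bsub>M\<^esub> ((\<lambda>u. r \<odot>\<^bsub>M\<^esub> u) ` (L +>\<^bsub>M\<^esub> x))"
    then obtain l1 l2 where l: "l1 \<in> L" "l2 \<in> L" and z: "z = l1 \<oplus>\<^bsub>M\<^esub> r \<odot>\<^bsub>M\<^esub> (l2 \<oplus>\<^bsub>M\<^esub> x)"
      unfolding set_add_def' a_r_coset_def' by auto
    have "z = (l1 \<oplus>\<^bsub>M\<^esub> r \<odot>\<^bsub>M\<^esub> l2) \<oplus>\<^bsub>M\<^esub> r \<odot>\<^bsub>M\<^esub> x"
      using z l r x c by (simp add: smult_r_distr M.a_assoc)
    moreover have "l1 \<oplus>\<^bsub>M\<^esub> r \<odot>\<^bsub>M\<^esub> l2 \<in> L" using l r Ls by simp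
    ultimately show "z \<in> L +>\<^bsub>M\<^esub> (r \<odot>\<^bsub>M\<^esub> x)" unfolding a_r_coset_def' by auto
  next
    fix z assume "z \<in> L +>\<^bsub>M\<^esub> (r \<odot>\<^bsub>M\<^esub> x)"
    then obtain l where l: "l \<in> L" and z: "z = l \<oplus>\<^bsub>M\<^esub> r \<odot>\<^bsub>M\<^esub> x"
      unfolding a_r_coset_def' by auto
    have "\<zero>\<^bsub>M\<^esub> \<oplus>\<^bsub>M\<^esub> x = x" using x by simp
    then have "r \<odot>\<^bsub>M\<^esub> x \<in> (\<lambda>u. r \<odot>\<^bsub>M\<^esub> u) ` (L +>\<^bsub>M\<^esub> x)"
      using Ls(2) unfolding a_r_coset_def' by (auto intro!: image_eqI[of _ _ "\<zero>\<^bsub>M\<^esub> \<oplus>\<^bsub>M\<^esub> x"])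
    then show "z \<in> L <+>\<^bsub>M\<^esub> ((\<lambda>u. r \<odot>\<^bsub>M\<^esub> u) ` (L +>\<^bsub>M\<^esub> x))"
      using z l unfolding set_add_def' by blast
  qed
qed

lemma quot_rmod:
  assumes L: "submodule L R M"
  shows "rmod R (quot_module M L)"
proof -
  interpret AS: abelian_subgroup L M by (rule submodule_abelian_subgroup[OF L])
  have Ls: "L \<subseteq> carrier M" using L unfolding submodule_iff by auto
  have rep: "\<And>U1. U1 \<in> A_RCOSETS M L \<Longrightarrow> \<exists>x\<in>carrier M. U1 = L +>\<^bsub>M\<^esub> x"
    unfolding A_RCOSETS_def' by auto
  have rin: "\<And>x. x \<in> carrier M \<Longrightarrow> L +>\<^bsub>M\<^esub> x \<in> A_RCOSETS M L"
    using Ls by (rule M.a_rcosetsI)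
  have sum: "\<And>x y. x \<in> carrier M \<Longrightarrow> y \<in> carrier M \<Longrightarrow> (L +>\<^bsub>M\<^esub> x) <+>\<^bsub>M\<^esub> (L +>\<^bsub>M\<^esub> y) = L +>\<^bsub>M\<^esub> (x \<oplus>\<^bsub>M\<^esub> y)"
    by (rule AS.a_rcos_sum)
  have zero: "L = L +>\<^bsub>M\<^esub> \<zero>\<^bsub>M\<^esub>" using Ls by simp
  have ag: "abelian_group (quot_module M L)"
  proof (rule abelian_groupI, unfold quot_simps)
    fix U1 V1 assume "U1 \<in> A_RCOSETS M L" "V1 \<in> A_RCOSETS M L"
    then obtain x y where "x \<in> carrier M" "U1 = L +>\<^bsub>M\<^esub> x" "y \<in> carrier M" "V1 = L +>\<^bsub>M\<^esub> y" using rep by metis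
    then show "U1 <+>\<^bsub>M\<^esub> V1 \<in> A_RCOSETS M L" using sum rin by simp
  next
    show "L \<in> A_RCOSETS M L" using zero rin by (metis M.zero_closed)
  next
    fix U1 V1 W1 assume "U1 \<in> A_RCOSETS M L" "V1 \<in> A_RCOSETS M L" "W1 \<in> A_RCOSETS M L"
    then obtain x y z where "x \<in> carrier M" "U1 = L +>\<^bsub>M\<^esub> x" "y \<in> carrier M" "V1 = L +>\<^bsub>M\<^esub> y"
       "z \<in> carrier M" "W1 = L +>\<^bsub>M\<^esub> z" using rep by metis
    then show "U1 <+>\<^bsub>M\<^esub> V1 <+>\<^bsub>M\<^esub> W1 = U1 <+>\<^bsub>M\<^esub> (V1 <+>\<^bsub>M\<^esub> W1)"
      by (simp add: sum M.a_assoc)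
  next
    fix U1 V1 assume "U1 \<in> A_RCOSETS M L" "V1 \<in> A_RCOSETS M L"
    then obtain x y where "x \<in> carrier M" "U1 = L +>\<^bsub>M\<^esub> x" "y \<in> carrier M" "V1 = L +>\<^bsub>M\<^esub> y" using rep by metis
    then show "U1 <+>\<^bsub>M\<^esub> V1 = V1 <+>\<^bsub>M\<^esub> U1"
      by (simp add: sum M.a_comm)
  next
    fix U1 assume "U1 \<in> A_RCOSETS M L"
    then obtain x where x: "x \<in> carrier M" "U1 = L +>\<^bsub>M\<^esub> x" using rep by blast
    then show "L <+>\<^bsub>M\<^esub> U1 = U1" using sum[of "\<zero>\<^bsub>M\<^esub>" x] zero by simp
  next
    fix U1 assume "U1 \<in> A_RCOSETS M L"
    then obtain x where x: "x \<in> carrier M" "U1 = L +>\<^bsub>M\<^esub> x" using rep by blast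
    then show "\<exists>V1\<in>A_RCOSETS M L. V1 <+>\<^bsub>M\<^esub> U1 = L"
      using sum[of "\<ominus>\<^bsub>M\<^esub> x" x] zero rin[of "\<ominus>\<^bsub>M\<^esub> x"] by (auto simp: M.l_neg)
  qed
  have sm: "\<And>r x. r \<in> carrier R \<Longrightarrow> x \<in> carrier M \<Longrightarrow>
     r \<odot>\<^bsub>quot_module M L\<^esub> (L +>\<^bsub>M\<^esub> x) = L +>\<^bsub>M\<^esub> (r \<odot>\<^bsub>M\<^esub> x)"
    using coset_smult[OF L] by (simp add: quot_simps)
  show ?thesis
  proof (intro rmod.intro R.ring_axioms ag rmod_axioms.intro, unfold quot_simps(1))
    fix a U1 assume a: "a \<in> carrier R" and "U1 \<in> A_RCOSETS M L"
    then obtain x where x: "x \<in> carrier M" "U1 = L +>\<^bsub>M\<^esub> x" using rep by blast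
    then show "a \<odot>\<^bsub>quot_module M L\<^esub> U1 \<in> A_RCOSETS M L" using sm a rin by simp
  next
    fix a b U1 assume a: "a \<in> carrier R" "b \<in> carrier R" and "U1 \<in> A_RCOSETS M L"
    then obtain x where x: "x \<in> carrier M" "U1 = L +>\<^bsub>M\<^esub> x" using rep by blast
    then show "(a \<oplus>\<^bsub>R\<^esub> b) \<odot>\<^bsub>quot_module M L\<^esub> U1 =
      a \<odot>\<^bsub>quot_module M L\<^esub> U1 \<oplus>\<^bsub>quot_module M L\<^esub> b \<odot>\<^bsub>quot_module M L\<^esub> U1"
      using sm a by (simp add: quot_simps sum smult_l_distr)
  next
    fix a U1 V1 assume a: "a \<in> carrier R" and "U1 \<in> A_RCOSETS M L" "V1 \<in> A_RCOSETS M L"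
    then obtain x y where x: "x \<in> carrier M" "U1 = L +>\<^bsub>M\<^esub> x" "y \<in> carrier M" "V1 = L +>\<^bsub>M\<^esub> y" using rep by blast
    then show "a \<odot>\<^bsub>quot_module M L\<^esub> (U1 \<oplus>\<^bsub>quot_module M L\<^esub> V1) =
      a \<odot>\<^bsub>quot_module M L\<^esub> U1 \<oplus>\<^bsub>quot_module M L\<^esub> a \<odot>\<^bsub>quot_module M L\<^esub> V1"
      using sm a by (simp add: quot_simps sum smult_r_distr del: quot_simps(4))
  next
    fix a b U1 assume a: "a \<in> carrier R" "b \<in> carrier R" and "U1 \<in> A_RCOSETS M L"
    then obtain x where x: "x \<in> carrier M" "U1 = L +>\<^bsub>M\<^esub> x" using rep by blast
    then show "(a \<otimes>\<^bsub>R\<^esub> b) \<odot>\<^bsub>quot_module M L\<^esub> U1 = a \<odot>\<^bsub>quot_module M L\<^esub> (b \<odot>\<^bsub>quot_module M L\<^esub> U1)"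
      using sm a by (simp add: smult_assoc1)
  next
    fix U1 assume "U1 \<in> A_RCOSETS M L"
    then obtain x where x: "x \<in> carrier M" "U1 = L +>\<^bsub>M\<^esub> x" using rep by blast
    then show "\<one>\<^bsub>R\<^esub> \<odot>\<^bsub>quot_module M L\<^esub> U1 = U1"
      using sm by simp
  qed
qed



lemma quot_facts:
  assumes L: "submodule L R M"
  shows "\<And>U1. U1 \<in> A_RCOSETS M L \<Longrightarrow> \<exists>x\<in>carrier M. U1 = L +>\<^bsub>M\<^esub> x"
    and "\<And>x. x \<in> carrier M \<Longrightarrow> L +>\<^bsub>M\<^esub> x \<in> A_RCOSETS M L"
    and "\<And>x y. x \<in> carrier M \<Longrightarrow> y \<in> carrier M \<Longrightarrow>
       (L +>\<^bsub>M\<^esub> x) \<oplus>\<^bsub>quot_module M L\<^esub> (L +>\<^bsub>M\<^esub> y) = L +>\<^bsub>M\<^esub> (x \<oplus>\<^bsub>M\<^esub> y)"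
    and "\<And>r x. r \<in> carrier R \<Longrightarrow> x \<in> carrier M \<Longrightarrow>
       r \<odot>\<^bsub>quot_module M L\<^esub> (L +>\<^bsub>M\<^esub> x) = L +>\<^bsub>M\<^esub> (r \<odot>\<^bsub>M\<^esub> x)"
    and "\<And>x. x \<in> carrier M \<Longrightarrow> \<ominus>\<^bsub>quot_module M L\<^esub> (L +>\<^bsub>M\<^esub> x) = L +>\<^bsub>M\<^esub> (\<ominus>\<^bsub>M\<^esub> x)"
    and "\<And>x. x \<in> carrier M \<Longrightarrow> x \<in> L +>\<^bsub>M\<^esub> x"
    and "\<And>x u. x \<in> carrier M \<Longrightarrow> u \<in> L +>\<^bsub>M\<^esub> x \<Longrightarrow> L +>\<^bsub>M\<^esub> x = L +>\<^bsub>M\<^esub> u \<and> u \<in> carrier M"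
    and "\<And>l. l \<in> L \<Longrightarrow> L +>\<^bsub>M\<^esub> l = L"
    and "\<And>x l. x \<in> carrier M \<Longrightarrow> l \<in> L \<Longrightarrow> l \<oplus>\<^bsub>M\<^esub> x \<in> L +>\<^bsub>M\<^esub> x"
proof -
  interpret AS: abelian_subgroup L M by (rule submodule_abelian_subgroup[OF L])
  interpret Q: rmod R "quot_module M L" by (rule quot_rmod[OF L])
  have Ls: "L \<subseteq> carrier M" using L unfolding submodule_iff by auto
  show rep: "\<And>U1. U1 \<in> A_RCOSETS M L \<Longrightarrow> \<exists>x\<in>carrier M. U1 = L +>\<^bsub>M\<^esub> x"
    unfolding A_RCOSETS_def' by auto
  show rin: "\<And>x. x \<in> carrier M \<Longrightarrow> L +>\<^bsub>M\<^esub> x \<in> A_RCOSETS M L"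
    using Ls by (rule M.a_rcosetsI)
  show sum: "\<And>x y. x \<in> carrier M \<Longrightarrow> y \<in> carrier M \<Longrightarrow>
       (L +>\<^bsub>M\<^esub> x) \<oplus>\<^bsub>quot_module M L\<^esub> (L +>\<^bsub>M\<^esub> y) = L +>\<^bsub>M\<^esub> (x \<oplus>\<^bsub>M\<^esub> y)"
    by (simp add: quot_simps AS.a_rcos_sum)
  show "\<And>r x. r \<in> carrier R \<Longrightarrow> x \<in> carrier M \<Longrightarrow>
       r \<odot>\<^bsub>quot_module M L\<^esub> (L +>\<^bsub>M\<^esub> x) = L +>\<^bsub>M\<^esub> (r \<odot>\<^bsub>M\<^esub> x)"
    using coset_smult[OF L] by (simp add: quot_simps)
  show "\<And>x. x \<in> carrier M \<Longrightarrow> \<ominus>\<^bsub>quot_module M L\<^esub> (L +>\<^bsub>M\<^esub> x) = L +>\<^bsub>M\<^esub> (\<ominus>\<^bsub>M\<^esub> x)"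
  proof -
    fix x assume x: "x \<in> carrier M"
    have "(L +>\<^bsub>M\<^esub> (\<ominus>\<^bsub>M\<^esub> x)) \<oplus>\<^bsub>quot_module M L\<^esub> (L +>\<^bsub>M\<^esub> x) = \<zero>\<^bsub>quot_module M L\<^esub>"
      using sum[of "\<ominus>\<^bsub>M\<^esub> x" x] x Ls by (simp add: M.l_neg quot_simps)
    then show "\<ominus>\<^bsub>quot_module M L\<^esub> (L +>\<^bsub>M\<^esub> x) = L +>\<^bsub>M\<^esub> (\<ominus>\<^bsub>M\<^esub> x)"
      using x rin Q.M.minus_equality by (simp add: quot_simps)
  qed
  show "\<And>x. x \<in> carrier M \<Longrightarrow> x \<in> L +>\<^bsub>M\<^esub> x" by (rule AS.a_rcos_self)
  show "\<And>x u. x \<in> carrier M \<Longrightarrow> u \<in> L +>\<^bsub>M\<^esub> x \<Longrightarrow> L +>\<^bsub>M\<^esub> x = L +>\<^bsub>M\<^esub> u \<and> u \<in> carrier M"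
    using AS.a_repr_independence' AS.a_elemrcos_carrier by blast
  show "\<And>l. l \<in> L \<Longrightarrow> L +>\<^bsub>M\<^esub> l = L" by (rule AS.a_rcos_const)
  show "\<And>x l. x \<in> carrier M \<Longrightarrow> l \<in> L \<Longrightarrow> l \<oplus>\<^bsub>M\<^esub> x \<in> L +>\<^bsub>M\<^esub> x"
    using Ls by (intro M.a_rcosI) auto
qed

lemma corr_a:
  assumes L: "submodule L R M" and H: "submodule H R M" and LH: "L \<subseteq> H"
  shows "submodule (cos_img M L H) R (quot_module M L)" and "\<Union> (cos_img M L H) = H"
proof -
  note qf = quot_facts[OF L]
  have Hs: "H \<subseteq> carrier M" "\<zero>\<^bsub>M\<^esub> \<in> H" "\<And>a. a\<in>H \<Longrightarrow> \<ominus>\<^bsub>M\<^esub> a \<in> H"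
     "\<And>a b. a\<in>H \<Longrightarrow> b\<in>H \<Longrightarrow> a \<oplus>\<^bsub>M\<^esub> b \<in> H" "\<And>r a. r\<in>carrier R \<Longrightarrow> a\<in>H \<Longrightarrow> r \<odot>\<^bsub>M\<^esub> a \<in> H"
    using H unfolding submodule_iff by auto
  have c: "\<And>h. h \<in> H \<Longrightarrow> h \<in> carrier M" using Hs(1) by blast
  have z: "L = L +>\<^bsub>M\<^esub> \<zero>\<^bsub>M\<^esub>" using qf(8) L unfolding submodule_iff by auto
  show "submodule (cos_img M L H) R (quot_module M L)"
    unfolding submodule_iff cos_img_def
  proof (intro conjI ballI)
    show "(\<lambda>h. L +>\<^bsub>M\<^esub> h) ` H \<subseteq> carrier (quot_module M L)"
      using qf(2) c by (auto simp: quot_simps)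
    show "\<zero>\<^bsub>quot_module M L\<^esub> \<in> (\<lambda>h. L +>\<^bsub>M\<^esub> h) ` H"
      using z Hs(2) by (auto simp: quot_simps)
  next
    fix a assume "a \<in> (\<lambda>h. L +>\<^bsub>M\<^esub> h) ` H"
    then obtain h where h: "h \<in> H" "a = L +>\<^bsub>M\<^esub> h" by blast
    then show "\<ominus>\<^bsub>quot_module M L\<^esub> a \<in> (\<lambda>h. L +>\<^bsub>M\<^esub> h) ` H"
      using qf(5) c Hs(3) by auto
  next
    fix a b assume "a \<in> (\<lambda>h. L +>\<^bsub>M\<^esub> h) ` H" "b \<in> (\<lambda>h. L +>\<^bsub>M\<^esub> h) ` H"
    then obtain h k where h: "h \<in> H" "a = L +>\<^bsub>M\<^esub> h" "k \<in> H" "b = L +>\<^bsub>M\<^esub> k" by blast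
    then show "a \<oplus>\<^bsub>quot_module M L\<^esub> b \<in> (\<lambda>h. L +>\<^bsub>M\<^esub> h) ` H"
      using qf(3) c Hs(4) by auto
  next
    fix r a assume r: "r \<in> carrier R" and "a \<in> (\<lambda>h. L +>\<^bsub>M\<^esub> h) ` H"
    then obtain h where h: "h \<in> H" "a = L +>\<^bsub>M\<^esub> h" by blast
    then show "r \<odot>\<^bsub>quot_module M L\<^esub> a \<in> (\<lambda>h. L +>\<^bsub>M\<^esub> h) ` H"
      using qf(4) r c Hs(5) by auto
  qed
  show "\<Union> (cos_img M L H) = H"
  proof (intro equalityI subsetI)
    fix u assume "u \<in> \<Union> (cos_img M L H)"
    then obtain h where h: "h \<in> H" "u \<in> L +>\<^bsub>M\<^esub> h" unfolding cos_img_def by blast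
    then obtain l where "l \<in> L" "u = l \<oplus>\<^bsub>M\<^esub> h" unfolding a_r_coset_def' by blast
    then show "u \<in> H" using h LH Hs(4) by blast
  next
    fix u assume "u \<in> H"
    then show "u \<in> \<Union> (cos_img M L H)" using qf(6) c unfolding cos_img_def by blast
  qed
qed

lemma corr_b:
  assumes L: "submodule L R M" and Hb: "submodule Hb R (quot_module M L)"
  shows "submodule (\<Union>Hb) R M" and "L \<subseteq> \<Union>Hb" and "cos_img M L (\<Union>Hb) = Hb"
proof -
  note qf = quot_facts[OF L]
  have Hs: "Hb \<subseteq> A_RCOSETS M L" "L \<in> Hb" "\<And>a. a\<in>Hb \<Longrightarrow> \<ominus>\<^bsub>quot_module M L\<^esub> a \<in> Hb"
     "\<And>a b. a\<in>Hb \<Longrightarrow> b\<in>Hb \<Longrightarrow> a \<oplus>\<^bsub>quot_module M L\<^esub> b \<in> Hb"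
     "\<And>r a. r\<in>carrier R \<Longrightarrow> a\<in>Hb \<Longrightarrow> r \<odot>\<^bsub>quot_module M L\<^esub> a \<in> Hb"
    using Hb unfolding submodule_iff by (auto simp: quot_simps(1,3))
  have Ls: "L \<subseteq> carrier M" "\<zero>\<^bsub>M\<^esub> \<in> L" using L unfolding submodule_iff by auto
  have mem: "u \<in> \<Union>Hb \<longleftrightarrow> u \<in> carrier M \<and> L +>\<^bsub>M\<^esub> u \<in> Hb" for u
  proof
    assume "u \<in> \<Union>Hb"
    then obtain X1 where X: "X1 \<in> Hb" "u \<in> X1" by blast
    then obtain x where "x \<in> carrier M" "X1 = L +>\<^bsub>M\<^esub> x" using Hs(1) qf(1) by blast
    then show "u \<in> carrier M \<and> L +>\<^bsub>M\<^esub> u \<in> Hb" using qf(7) X by metis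
  next
    assume "u \<in> carrier M \<and> L +>\<^bsub>M\<^esub> u \<in> Hb"
    then show "u \<in> \<Union>Hb" using qf(6) by blast
  qed
  show "L \<subseteq> \<Union>Hb" using Hs(2) by blast
  show "submodule (\<Union>Hb) R M"
    unfolding submodule_iff
  proof (intro conjI ballI)
    show "\<Union>Hb \<subseteq> carrier M" using mem by blast
    show "\<zero>\<^bsub>M\<^esub> \<in> \<Union>Hb" using Ls Hs(2) by blast
  next
    fix a assume "a \<in> \<Union>Hb"
    then show "\<ominus>\<^bsub>M\<^esub> a \<in> \<Union>Hb" using mem qf(5) Hs(3) by (metis M.a_inv_closed)
  next
    fix a b assume "a \<in> \<Union>Hb" "b \<in> \<Union>Hb"
    then show "a \<oplus>\<^bsub>M\<^esub> b \<in> \<Union>Hb" using mem qf(3) Hs(4) by (metis M.add.m_closed)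
  next
    fix r a assume "r \<in> carrier R" "a \<in> \<Union>Hb"
    then show "r \<odot>\<^bsub>M\<^esub> a \<in> \<Union>Hb" using mem qf(4) Hs(5) by (metis smult_closed)
  qed
  show "cos_img M L (\<Union>Hb) = Hb"
  proof (intro equalityI subsetI)
    fix X1 assume "X1 \<in> cos_img M L (\<Union>Hb)"
    then show "X1 \<in> Hb" using mem unfolding cos_img_def by blast
  next
    fix X1 assume X: "X1 \<in> Hb"
    then obtain x where x: "x \<in> carrier M" "X1 = L +>\<^bsub>M\<^esub> x" using Hs(1) qf(1) by blast
    then have "x \<in> \<Union>Hb" using mem X by simp
    then show "X1 \<in> cos_img M L (\<Union>Hb)" using x unfolding cos_img_def by blast
  qed
qed


lemma corr_chain:
  assumes L: "submodule L R M"
    and Lo: "cos_img M L (\<Union>Lo) = Lo" and Hi: "cos_img M L (\<Union>Hi) = Hi"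
  shows "acc (\<lambda>Hb. submodule Hb R (quot_module M L) \<and> Lo \<subseteq> Hb \<and> Hb \<subseteq> Hi) \<longleftrightarrow>
         acc (\<lambda>H. submodule H R M \<and> L \<subseteq> H \<and> \<Union>Lo \<subseteq> H \<and> H \<subseteq> \<Union>Hi)"
    and "dcc (\<lambda>Hb. submodule Hb R (quot_module M L) \<and> Lo \<subseteq> Hb \<and> Hb \<subseteq> Hi) \<longleftrightarrow>
         dcc (\<lambda>H. submodule H R M \<and> L \<subseteq> H \<and> \<Union>Lo \<subseteq> H \<and> H \<subseteq> \<Union>Hi)"
proof -
  define P1 where "P1 = (\<lambda>Hb. submodule Hb R (quot_module M L) \<and> Lo \<subseteq> Hb \<and> Hb \<subseteq> Hi)"
  define P2 where "P2 = (\<lambda>H. submodule H R M \<and> L \<subseteq> H \<and> \<Union>Lo \<subseteq> H \<and> H \<subseteq> \<Union>Hi)"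
  have cm: "\<And>H K. H \<subseteq> K \<Longrightarrow> cos_img M L H \<subseteq> cos_img M L K" unfolding cos_img_def by (rule image_mono)
  have A: "P2 (\<Union>Hb)" if "P1 Hb" for Hb
  proof -
    have s: "submodule Hb R (quot_module M L)" "Lo \<subseteq> Hb" "Hb \<subseteq> Hi" using that unfolding P1_def by auto
    have 1: "submodule (\<Union>Hb) R M" by (rule corr_b(1)[OF L s(1)])
    have 2: "L \<subseteq> \<Union>Hb" by (rule corr_b(2)[OF L s(1)])
    have 3: "\<Union>Lo \<subseteq> \<Union>Hb" by (rule Union_mono[OF s(2)])
    have 4: "\<Union>Hb \<subseteq> \<Union>Hi" by (rule Union_mono[OF s(3)])
    show ?thesis unfolding P2_def using 1 2 3 4 by blast
  qed
  have A2: "Hb = Kb" if "P1 Hb" "P1 Kb" "\<Union>Hb = \<Union>Kb" for Hb Kb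
  proof -
    have s: "submodule Hb R (quot_module M L)" "submodule Kb R (quot_module M L)" using that unfolding P1_def by auto
    have "Hb = cos_img M L (\<Union>Hb)" by (rule corr_b(3)[OF L s(1), symmetric])
    also have "\<dots> = cos_img M L (\<Union>Kb)" using that(3) by (rule arg_cong)
    also have "\<dots> = Kb" by (rule corr_b(3)[OF L s(2)])
    finally show ?thesis .
  qed
  have B: "P1 (cos_img M L H)" if "P2 H" for H
  proof -
    have s: "submodule H R M" "L \<subseteq> H" "\<Union>Lo \<subseteq> H" "H \<subseteq> \<Union>Hi" using that unfolding P2_def by auto
    have 1: "submodule (cos_img M L H) R (quot_module M L)" by (rule corr_a(1)[OF L s(1,2)])
    have 3: "cos_img M L (\<Union>Lo) \<subseteq> cos_img M L H" by (rule cm[OF s(3)])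
    have 4: "cos_img M L H \<subseteq> cos_img M L (\<Union>Hi)" by (rule cm[OF s(4)])
    show ?thesis unfolding P1_def using 1 3 4 unfolding Lo Hi by blast
  qed
  have B2: "H = K" if "P2 H" "P2 K" "cos_img M L H = cos_img M L K" for H K
  proof -
    have s: "submodule H R M" "L \<subseteq> H" "submodule K R M" "L \<subseteq> K" using that unfolding P2_def by auto
    have "H = \<Union>(cos_img M L H)" by (rule corr_a(2)[OF L s(1,2), symmetric])
    also have "\<dots> = \<Union>(cos_img M L K)" using that(3) by (rule arg_cong)
    also have "\<dots> = K" by (rule corr_a(2)[OF L s(3,4)])
    finally show ?thesis .
  qed
  have "acc P1 \<longleftrightarrow> acc P2"
  proof
    assume "acc P2"
    then show "acc P1" by (rule acc_transfer[where g = Union]) (fact A, erule Union_mono, fact A2)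
  next
    assume "acc P1"
    then show "acc P2" by (rule acc_transfer[where g = "cos_img M L"]) (fact B, erule cm, fact B2)
  qed
  then show "acc (\<lambda>Hb. submodule Hb R (quot_module M L) \<and> Lo \<subseteq> Hb \<and> Hb \<subseteq> Hi) \<longleftrightarrow>
         acc (\<lambda>H. submodule H R M \<and> L \<subseteq> H \<and> \<Union>Lo \<subseteq> H \<and> H \<subseteq> \<Union>Hi)"
    unfolding P1_def P2_def .
  have "dcc P1 \<longleftrightarrow> dcc P2"
  proof
    assume "dcc P2"
    then show "dcc P1" by (rule dcc_transfer[where g = Union]) (fact A, erule Union_mono, fact A2)
  next
    assume "dcc P1"
    then show "dcc P2" by (rule dcc_transfer[where g = "cos_img M L"]) (fact B, erule cm, fact B2)
  qed
  then show "dcc (\<lambda>Hb. submodule Hb R (quot_module M L) \<and> Lo \<subseteq> Hb \<and> Hb \<subseteq> Hi) \<longleftrightarrow>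
         dcc (\<lambda>H. submodule H R M \<and> L \<subseteq> H \<and> \<Union>Lo \<subseteq> H \<and> H \<subseteq> \<Union>Hi)"
    unfolding P1_def P2_def .
qed

lemma cos_img_carrier:
  assumes L: "submodule L R M"
  shows "cos_img M L (carrier M) = A_RCOSETS M L" and "\<Union>(A_RCOSETS M L) = carrier M"
proof -
  interpret AS: abelian_subgroup L M by (rule submodule_abelian_subgroup[OF L])
  show "cos_img M L (carrier M) = A_RCOSETS M L" unfolding cos_img_def A_RCOSETS_def' by auto
  show "\<Union>(A_RCOSETS M L) = carrier M" by (rule AS.a_rcosets_part_G)
qed


lemma factor_iff:
  assumes Lo: "submodule Lo R M" and Hi: "submodule Hi R M" and LH: "Lo \<subseteq> Hi"
  shows "noetherian_module R (quot_module (M\<lparr>carrier := Hi\<rparr>) Lo) \<longleftrightarrow> acc (intv R M Lo Hi)"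
    and "artinian_module R (quot_module (M\<lparr>carrier := Hi\<rparr>) Lo) \<longleftrightarrow> dcc (intv R M Lo Hi)"
proof -
  define N where "N = M\<lparr>carrier := Hi\<rparr>"
  interpret N: rmod R N unfolding N_def by (rule sub_restrict_rmod(1)[OF Hi])
  have LoN: "submodule Lo R N" unfolding N_def using submodule_restrict_iff[OF Hi] Lo LH by blast
  have c1: "cos_img N Lo (\<Union>{}) = {}" unfolding cos_img_def by simp
  have c2: "cos_img N Lo (\<Union>(A_RCOSETS N Lo)) = A_RCOSETS N Lo"
    using N.cos_img_carrier[OF LoN] by simp
  have e1: "(\<lambda>Hb. submodule Hb R (quot_module N Lo)) =
      (\<lambda>Hb. submodule Hb R (quot_module N Lo) \<and> {} \<subseteq> Hb \<and> Hb \<subseteq> A_RCOSETS N Lo)"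
  proof (rule ext)
    fix Hb
    show "submodule Hb R (quot_module N Lo) =
      (submodule Hb R (quot_module N Lo) \<and> {} \<subseteq> Hb \<and> Hb \<subseteq> A_RCOSETS N Lo)"
      using submodule_iff[of Hb R "quot_module N Lo"] quot_simps(1)[of N Lo] by blast
  qed
  have un: "\<Union>(A_RCOSETS N Lo) = Hi" using N.cos_img_carrier(2)[OF LoN] unfolding N_def by simp
  have e2: "(\<lambda>H. submodule H R N \<and> Lo \<subseteq> H \<and> \<Union>{} \<subseteq> H \<and> H \<subseteq> \<Union>(A_RCOSETS N Lo)) = intv R M Lo Hi"
  proof (rule ext)
    fix H
    show "(submodule H R N \<and> Lo \<subseteq> H \<and> \<Union>{} \<subseteq> H \<and> H \<subseteq> \<Union>(A_RCOSETS N Lo)) = intv R M Lo Hi H"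
      using submodule_restrict_iff[OF Hi, of H] un unfolding intv_def N_def by auto
  qed
  show "noetherian_module R (quot_module (M\<lparr>carrier := Hi\<rparr>) Lo) \<longleftrightarrow> acc (intv R M Lo Hi)"
    using N.corr_chain(1)[OF LoN c1 c2] unfolding noeth_acc N_def[symmetric] e1[symmetric] e2 .
  show "artinian_module R (quot_module (M\<lparr>carrier := Hi\<rparr>) Lo) \<longleftrightarrow> dcc (intv R M Lo Hi)"
    using N.corr_chain(2)[OF LoN c1 c2] unfolding art_dcc N_def[symmetric] e1[symmetric] e2 .
qed

lemma quot_factor_iff:
  assumes C: "submodule C R M" and X1: "submodule X1 R (quot_module M C)"
    and Y1: "submodule Y1 R (quot_module M C)" and XY: "X1 \<subseteq> Y1"
  shows "noetherian_module R (quot_module ((quot_module M C)\<lparr>carrier := Y1\<rparr>) X1) \<longleftrightarrow> acc (intv R M (\<Union>X1) (\<Union>Y1))"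
    and "artinian_module R (quot_module ((quot_module M C)\<lparr>carrier := Y1\<rparr>) X1) \<longleftrightarrow> dcc (intv R M (\<Union>X1) (\<Union>Y1))"
proof -
  interpret Q: rmod R "quot_module M C" by (rule quot_rmod[OF C])
  have cx: "cos_img M C (\<Union>X1) = X1" by (rule corr_b(3)[OF C X1])
  have cy: "cos_img M C (\<Union>Y1) = Y1" by (rule corr_b(3)[OF C Y1])
  have CX: "C \<subseteq> \<Union>X1" by (rule corr_b(2)[OF C X1])
  have e: "intv R (quot_module M C) X1 Y1 = (\<lambda>Hb. submodule Hb R (quot_module M C) \<and> X1 \<subseteq> Hb \<and> Hb \<subseteq> Y1)"
    unfolding intv_def ..
  have e2: "(\<lambda>H. submodule H R M \<and> C \<subseteq> H \<and> \<Union>X1 \<subseteq> H \<and> H \<subseteq> \<Union>Y1) = intv R M (\<Union>X1) (\<Union>Y1)"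
  proof (rule ext)
    fix H show "(submodule H R M \<and> C \<subseteq> H \<and> \<Union>X1 \<subseteq> H \<and> H \<subseteq> \<Union>Y1) = intv R M (\<Union>X1) (\<Union>Y1) H"
      unfolding intv_def using CX by blast
  qed
  show "noetherian_module R (quot_module ((quot_module M C)\<lparr>carrier := Y1\<rparr>) X1) \<longleftrightarrow> acc (intv R M (\<Union>X1) (\<Union>Y1))"
    using Q.factor_iff(1)[OF X1 Y1 XY] corr_chain(1)[OF C cx cy] unfolding e e2 by simp
  show "artinian_module R (quot_module ((quot_module M C)\<lparr>carrier := Y1\<rparr>) X1) \<longleftrightarrow> dcc (intv R M (\<Union>X1) (\<Union>Y1))"
    using Q.factor_iff(2)[OF X1 Y1 XY] corr_chain(2)[OF C cx cy] unfolding e e2 by simp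
qed


lemma minimax_quot_iff:
  assumes C: "submodule C R M"
  shows "minimax_module R (quot_module M C) \<longleftrightarrow> rel_mmx R M C"
proof
  interpret Q: rmod R "quot_module M C" by (rule quot_rmod[OF C])
  assume "minimax_module R (quot_module M C)"
  then obtain n S where S0: "S 0 = {\<zero>\<^bsub>quot_module M C\<^esub>}" and Sn: "S n = carrier (quot_module M C)"
    and Ssub: "\<forall>i\<le>n. submodule (S i) R (quot_module M C)"
    and Sf: "\<forall>i<n. S i \<subseteq> S (Suc i) \<and>
           (noetherian_module R (quot_module ((quot_module M C)\<lparr>carrier := S (Suc i)\<rparr>) (S i)) \<or>
            artinian_module R (quot_module ((quot_module M C)\<lparr>carrier := S (Suc i)\<rparr>) (S i)))"
    unfolding minimax_module_def by blast
  define T where "T = (\<lambda>i. \<Union>(S i))"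
  have "T 0 = C" unfolding T_def S0 quot_simps by simp
  moreover have "T n = carrier M" unfolding T_def Sn quot_simps by (rule cos_img_carrier(2)[OF C])
  moreover have "\<forall>i\<le>n. submodule (T i) R M" unfolding T_def using Ssub corr_b(1)[OF C] by blast
  moreover have "\<forall>i<n. T i \<subseteq> T (Suc i) \<and> (acc (intv R M (T i) (T (Suc i))) \<or> dcc (intv R M (T i) (T (Suc i))))"
  proof (intro allI impI)
    fix i assume i: "i < n"
    then have s1: "submodule (S i) R (quot_module M C)" and s2: "submodule (S (Suc i)) R (quot_module M C)"
      and ss: "S i \<subseteq> S (Suc i)" using Ssub Sf by auto
    have "T i \<subseteq> T (Suc i)" unfolding T_def using ss by (rule Union_mono)
    moreover have "acc (intv R M (T i) (T (Suc i))) \<or> dcc (intv R M (T i) (T (Suc i)))"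
      using Sf i quot_factor_iff[OF C s1 s2 ss] unfolding T_def by blast
    ultimately show "T i \<subseteq> T (Suc i) \<and> (acc (intv R M (T i) (T (Suc i))) \<or> dcc (intv R M (T i) (T (Suc i))))" by blast
  qed
  ultimately show "rel_mmx R M C" unfolding rel_mmx_def by blast
next
  interpret Q: rmod R "quot_module M C" by (rule quot_rmod[OF C])
  assume "rel_mmx R M C"
  then obtain n T where T0: "T 0 = C" and Tn: "T n = carrier M"
    and Tsub: "\<forall>i\<le>n. submodule (T i) R M"
    and Tf: "\<forall>i<n. T i \<subseteq> T (Suc i) \<and> (acc (intv R M (T i) (T (Suc i))) \<or> dcc (intv R M (T i) (T (Suc i))))"
    unfolding rel_mmx_def by blast
  have CT: "C \<subseteq> T i" if "i \<le> n" for i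
    using that
  proof (induction i)
    case 0 then show ?case using T0 by simp
  next
    case (Suc i) then show ?case using Tf by (meson Suc_le_lessD less_imp_le_nat order_trans)
  qed
  define S where "S = (\<lambda>i. cos_img M C (T i))"
  have Ssub: "submodule (S i) R (quot_module M C)" and US: "\<Union>(S i) = T i" if "i \<le> n" for i
    using corr_a[OF C _ CT[OF that]] Tsub that unfolding S_def by auto
  have Cne: "C \<noteq> {}" using C unfolding submodule_iff by auto
  have "S 0 = {\<zero>\<^bsub>quot_module M C\<^esub>}"
    unfolding S_def T0 cos_img_def quot_simps using quot_facts(8)[OF C] Cne by auto
  moreover have "S n = carrier (quot_module M C)"
    unfolding S_def Tn quot_simps by (rule cos_img_carrier(1)[OF C])
  moreover have "\<forall>i\<le>n. submodule (S i) R (quot_module M C)" using Ssub by blast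
  moreover have "\<forall>i<n. S i \<subseteq> S (Suc i) \<and>
           (noetherian_module R (quot_module ((quot_module M C)\<lparr>carrier := S (Suc i)\<rparr>) (S i)) \<or>
            artinian_module R (quot_module ((quot_module M C)\<lparr>carrier := S (Suc i)\<rparr>) (S i)))"
  proof (intro allI impI)
    fix i assume i: "i < n"
    then have s1: "submodule (S i) R (quot_module M C)" and s2: "submodule (S (Suc i)) R (quot_module M C)"
      using Ssub by auto
    have ss: "S i \<subseteq> S (Suc i)" unfolding S_def cos_img_def using Tf i by (intro image_mono) blast
    have u: "\<Union>(S i) = T i" "\<Union>(S (Suc i)) = T (Suc i)" using US i by auto
    show "S i \<subseteq> S (Suc i) \<and>
           (noetherian_module R (quot_module ((quot_module M C)\<lparr>carrier := S (Suc i)\<rparr>) (S i)) \<or>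
            artinian_module R (quot_module ((quot_module M C)\<lparr>carrier := S (Suc i)\<rparr>) (S i)))"
      using ss Tf i quot_factor_iff[OF C s1 s2 ss] unfolding u by blast
  qed
  ultimately show "minimax_module R (quot_module M C)" unfolding minimax_module_def by blast
qed


lemma sub_facts:
  assumes "submodule H R M"
  shows "H \<subseteq> carrier M" "\<zero>\<^bsub>M\<^esub> \<in> H" "\<And>a. a\<in>H \<Longrightarrow> \<ominus>\<^bsub>M\<^esub> a \<in> H"
     "\<And>a b. a\<in>H \<Longrightarrow> b\<in>H \<Longrightarrow> a \<oplus>\<^bsub>M\<^esub> b \<in> H" "\<And>r a. r\<in>carrier R \<Longrightarrow> a\<in>H \<Longrightarrow> r \<odot>\<^bsub>M\<^esub> a \<in> H"
     "\<And>a. a \<in> H \<Longrightarrow> a \<in> carrier M"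
  using assms unfolding submodule_iff by auto

lemma int_sub:
  assumes "submodule H R M" "submodule K R M"
  shows "submodule (H \<inter> K) R M"
  using sub_facts[OF assms(1)] sub_facts[OF assms(2)] unfolding submodule_iff by auto

lemma msum_sub:
  assumes H: "submodule H R M" and K: "submodule K R M"
  shows "submodule (msum M H K) R M"
proof -
  note h = sub_facts[OF H] and k = sub_facts[OF K]
  show ?thesis unfolding submodule_iff
  proof (intro conjI ballI)
    show "msum M H K \<subseteq> carrier M" unfolding msum_def using h(6) k(6) by auto
    have "\<zero>\<^bsub>M\<^esub> = \<zero>\<^bsub>M\<^esub> \<oplus>\<^bsub>M\<^esub> \<zero>\<^bsub>M\<^esub>" by simp
    then show "\<zero>\<^bsub>M\<^esub> \<in> msum M H K" unfolding msum_def using h(2) k(2) by blast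
  next
    fix a assume "a \<in> msum M H K"
    then obtain x y where xy: "x \<in> H" "y \<in> K" "a = x \<oplus>\<^bsub>M\<^esub> y" unfolding msum_def by blast
    then have "\<ominus>\<^bsub>M\<^esub> a = \<ominus>\<^bsub>M\<^esub> x \<oplus>\<^bsub>M\<^esub> \<ominus>\<^bsub>M\<^esub> y" using h(6) k(6) by (simp add: M.minus_add)
    then show "\<ominus>\<^bsub>M\<^esub> a \<in> msum M H K" unfolding msum_def using xy h(3) k(3) by blast
  next
    fix a b assume "a \<in> msum M H K" "b \<in> msum M H K"
    then obtain x y x' y' where xy: "x \<in> H" "y \<in> K" "a = x \<oplus>\<^bsub>M\<^esub> y" "x' \<in> H" "y' \<in> K" "b = x' \<oplus>\<^bsub>M\<^esub> y'"
      unfolding msum_def by blast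
    then have "a \<oplus>\<^bsub>M\<^esub> b = (x \<oplus>\<^bsub>M\<^esub> x') \<oplus>\<^bsub>M\<^esub> (y \<oplus>\<^bsub>M\<^esub> y')" using h(6) k(6) by (simp add: M.a_ac)
    then show "a \<oplus>\<^bsub>M\<^esub> b \<in> msum M H K" unfolding msum_def using xy h(4) k(4) by blast
  next
    fix r a assume r: "r \<in> carrier R" and "a \<in> msum M H K"
    then obtain x y where xy: "x \<in> H" "y \<in> K" "a = x \<oplus>\<^bsub>M\<^esub> y" unfolding msum_def by blast
    then have "r \<odot>\<^bsub>M\<^esub> a = r \<odot>\<^bsub>M\<^esub> x \<oplus>\<^bsub>M\<^esub> r \<odot>\<^bsub>M\<^esub> y" using h(6) k(6) r by (simp add: smult_r_distr)
    then show "r \<odot>\<^bsub>M\<^esub> a \<in> msum M H K" unfolding msum_def using xy h(5) k(5) r by blast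
  qed
qed

lemma msum_ge:
  assumes H: "submodule H R M" and K: "submodule K R M"
  shows "H \<subseteq> msum M H K" "K \<subseteq> msum M H K"
proof -
  note h = sub_facts[OF H] and k = sub_facts[OF K]
  show "H \<subseteq> msum M H K"
  proof
    fix x assume x: "x \<in> H"
    then have "x = x \<oplus>\<^bsub>M\<^esub> \<zero>\<^bsub>M\<^esub>" using h(6) by simp
    then show "x \<in> msum M H K" unfolding msum_def using x k(2) by blast
  qed
  show "K \<subseteq> msum M H K"
  proof
    fix x assume x: "x \<in> K"
    then have "x = \<zero>\<^bsub>M\<^esub> \<oplus>\<^bsub>M\<^esub> x" using k(6) by simp
    then show "x \<in> msum M H K" unfolding msum_def using x h(2) by blast
  qed
qed

lemma msum_le:
  assumes S: "submodule S R M" and "H \<subseteq> S" "K \<subseteq> S"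
  shows "msum M H K \<subseteq> S"
  using sub_facts(4)[OF S] assms(2,3) unfolding msum_def by blast

lemma msum_mono: "H \<subseteq> H' \<Longrightarrow> K \<subseteq> K' \<Longrightarrow> msum M H K \<subseteq> msum M H' K'"
  unfolding msum_def by blast

lemma modular1:
  assumes H: "submodule H R M" and T: "submodule T R M" and D: "submodule D R M"
    and DH: "D \<subseteq> H" and HT: "H \<subseteq> msum M T D"
  shows "H = msum M (H \<inter> T) D"
proof
  show "msum M (H \<inter> T) D \<subseteq> H" using msum_le[OF H, of "H \<inter> T" D] DH by blast
  show "H \<subseteq> msum M (H \<inter> T) D"
  proof
    fix h assume h: "h \<in> H"
    then obtain t d where td: "t \<in> T" "d \<in> D" "h = t \<oplus>\<^bsub>M\<^esub> d" using HT unfolding msum_def by blast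
    have tc: "t \<in> carrier M" "d \<in> carrier M" using td sub_facts(6)[OF T] sub_facts(6)[OF D] by auto
    have "h \<oplus>\<^bsub>M\<^esub> \<ominus>\<^bsub>M\<^esub> d = t" using tc td(3) by (simp add: M.a_assoc M.r_neg)
    moreover have "h \<oplus>\<^bsub>M\<^esub> \<ominus>\<^bsub>M\<^esub> d \<in> H" using h td(2) DH sub_facts(3,4)[OF H] by blast
    ultimately show "h \<in> msum M (H \<inter> T) D" using td unfolding msum_def by blast
  qed
qed

lemma modular2:
  assumes H: "submodule H R M" and U: "submodule U R M" and C: "submodule C R M"
    and UH: "U \<inter> C \<subseteq> H" and HC: "H \<subseteq> C"
  shows "H = msum M H U \<inter> C"
proof
  show "H \<subseteq> msum M H U \<inter> C" using msum_ge(1)[OF H U] HC by blast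
  show "msum M H U \<inter> C \<subseteq> H"
  proof
    fix a assume "a \<in> msum M H U \<inter> C"
    then obtain h u where hu: "h \<in> H" "u \<in> U" "a = h \<oplus>\<^bsub>M\<^esub> u" "a \<in> C" unfolding msum_def by blast
    have c: "h \<in> carrier M" "u \<in> carrier M" using hu sub_facts(6)[OF H] sub_facts(6)[OF U] by auto
    have "\<ominus>\<^bsub>M\<^esub> h \<oplus>\<^bsub>M\<^esub> a = u" using c hu(3) by (simp add: M.a_assoc[symmetric] M.l_neg)
    moreover have "\<ominus>\<^bsub>M\<^esub> h \<oplus>\<^bsub>M\<^esub> a \<in> C" using hu(1,4) HC sub_facts(3,4)[OF C] by blast
    ultimately have "u \<in> H" using hu(2) UH by blast
    then show "a \<in> H" using hu(1,3) sub_facts(4)[OF H] by blast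
  qed
qed


lemma rel_mmx_mono:
  assumes RC: "rel_mmx R M C" and CD: "C \<subseteq> D" and D: "submodule D R M"
  shows "rel_mmx R M D"
proof -
  obtain n T where T0: "T 0 = C" and Tn: "T n = carrier M"
    and Tsub: "\<forall>i\<le>n. submodule (T i) R M"
    and Tf: "\<forall>i<n. T i \<subseteq> T (Suc i) \<and> (acc (intv R M (T i) (T (Suc i))) \<or> dcc (intv R M (T i) (T (Suc i))))"
    using RC unfolding rel_mmx_def by blast
  define T' where "T' = (\<lambda>i. msum M (T i) D)"
  have C: "submodule C R M" using Tsub T0 by auto
  have "T' 0 = D"
  proof
    show "T' 0 \<subseteq> D" unfolding T'_def T0 using msum_le[OF D CD] by blast
    show "D \<subseteq> T' 0" unfolding T'_def T0 by (rule msum_ge(2)[OF C D])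
  qed
  moreover have "T' n = carrier M"
  proof
    show "T' n \<subseteq> carrier M" unfolding T'_def Tn using msum_sub[OF _ D, of "carrier M"] Tsub Tn sub_facts(1)
      by (metis order_refl)
    show "carrier M \<subseteq> T' n" unfolding T'_def Tn using msum_ge(1)[OF _ D, of "carrier M"] Tsub Tn
      by (metis order_refl)
  qed
  moreover have T'sub: "\<forall>i\<le>n. submodule (T' i) R M" unfolding T'_def using Tsub msum_sub[OF _ D] by blast
  moreover have "\<forall>i<n. T' i \<subseteq> T' (Suc i) \<and> (acc (intv R M (T' i) (T' (Suc i))) \<or> dcc (intv R M (T' i) (T' (Suc i))))"
  proof (intro allI impI)
    fix i assume i: "i < n"
    have s1: "submodule (T i) R M" and s2: "submodule (T (Suc i)) R M" and ss: "T i \<subseteq> T (Suc i)"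
      using Tsub Tf i by auto
    have le: "T' i \<subseteq> T' (Suc i)" unfolding T'_def using ss by (rule msum_mono) simp
    have ti: "T i \<subseteq> T' i" unfolding T'_def by (rule msum_ge(1)[OF s1 D])
    have dt: "D \<subseteq> T' i" unfolding T'_def by (rule msum_ge(2)[OF s1 D])
    define g where "g = (\<lambda>H. H \<inter> T (Suc i))"
    have A: "intv R M (T i) (T (Suc i)) (g H)" if "intv R M (T' i) (T' (Suc i)) H" for H
    proof -
      have h: "submodule H R M" "T' i \<subseteq> H" "H \<subseteq> T' (Suc i)" using that unfolding intv_def by auto
      show ?thesis unfolding intv_def g_def using int_sub[OF h(1) s2] h(2) ti ss by blast
    qed
    have B: "H = K" if "intv R M (T' i) (T' (Suc i)) H" "intv R M (T' i) (T' (Suc i)) K" "g H = g K" for H K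
    proof -
      have h: "submodule H R M" "T' i \<subseteq> H" "H \<subseteq> T' (Suc i)" using that(1) unfolding intv_def by auto
      have k: "submodule K R M" "T' i \<subseteq> K" "K \<subseteq> T' (Suc i)" using that(2) unfolding intv_def by auto
      have "H = msum M (H \<inter> T (Suc i)) D" using modular1[OF h(1) s2 D] h(3) dt h(2) unfolding T'_def by blast
      also have "\<dots> = msum M (K \<inter> T (Suc i)) D" using that(3) unfolding g_def by simp
      also have "\<dots> = K" using modular1[OF k(1) s2 D] k(3) dt k(2) unfolding T'_def by auto
      finally show ?thesis .
    qed
    have gm: "g H \<subseteq> g K" if "H \<subseteq> K" for H K unfolding g_def using that by blast
    have "acc (intv R M (T i) (T (Suc i))) \<Longrightarrow> acc (intv R M (T' i) (T' (Suc i)))"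
      by (erule acc_transfer[where g = g]) (fact A, erule gm, fact B)
    moreover have "dcc (intv R M (T i) (T (Suc i))) \<Longrightarrow> dcc (intv R M (T' i) (T' (Suc i)))"
      by (erule dcc_transfer[where g = g]) (fact A, erule gm, fact B)
    ultimately show "T' i \<subseteq> T' (Suc i) \<and> (acc (intv R M (T' i) (T' (Suc i))) \<or> dcc (intv R M (T' i) (T' (Suc i))))"
      using le Tf i by blast
  qed
  ultimately show ?thesis unfolding rel_mmx_def by blast
qed


lemma rel_mmx_inter:
  assumes R1: "rel_mmx R M C1" and R2: "rel_mmx R M C2"
  shows "rel_mmx R M (C1 \<inter> C2)"
proof -
  obtain n T where T0: "T 0 = C1" and Tn: "T n = carrier M"
    and Tsub: "\<forall>i\<le>n. submodule (T i) R M"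
    and Tf: "\<forall>i<n. T i \<subseteq> T (Suc i) \<and> (acc (intv R M (T i) (T (Suc i))) \<or> dcc (intv R M (T i) (T (Suc i))))"
    using R1 unfolding rel_mmx_def by blast
  obtain m U where U0: "U 0 = C2" and Um: "U m = carrier M"
    and Usub: "\<forall>i\<le>m. submodule (U i) R M"
    and Uf: "\<forall>i<m. U i \<subseteq> U (Suc i) \<and> (acc (intv R M (U i) (U (Suc i))) \<or> dcc (intv R M (U i) (U (Suc i))))"
    using R2 unfolding rel_mmx_def by blast
  have C1: "submodule C1 R M" using Tsub T0 by auto
  have C1c: "C1 \<subseteq> carrier M" by (rule sub_facts(1)[OF C1])
  define S where "S = (\<lambda>k. if k \<le> m then U k \<inter> C1 else T (k - m))"
  have Shi: "S k = T (k - m)" if "m \<le> k" for k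
  proof (cases "k = m")
    case True then show ?thesis unfolding S_def using Um T0 C1c by auto
  next
    case False then show ?thesis unfolding S_def using that by auto
  qed
  have Slo: "S k = U k \<inter> C1" if "k \<le> m" for k unfolding S_def using that by simp
  have "S 0 = C1 \<inter> C2" using Slo[of 0] U0 by auto
  moreover have "S (m + n) = carrier M" using Shi[of "m + n"] Tn by simp
  moreover have "\<forall>i\<le>m + n. submodule (S i) R M"
  proof (intro allI impI)
    fix i assume i: "i \<le> m + n"
    show "submodule (S i) R M"
    proof (cases "i \<le> m")
      case True then show ?thesis using Slo[OF True] int_sub[OF _ C1, of "U i"] Usub by auto
    next
      case False then show ?thesis using Shi[of i] Tsub i by auto
    qed
  qed
  moreover have "\<forall>i<m + n. S i \<subseteq> S (Suc i) \<and> (acc (intv R M (S i) (S (Suc i))) \<or> dcc (intv R M (S i) (S (Suc i))))"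
  proof (intro allI impI)
    fix i assume i: "i < m + n"
    show "S i \<subseteq> S (Suc i) \<and> (acc (intv R M (S i) (S (Suc i))) \<or> dcc (intv R M (S i) (S (Suc i))))"
    proof (cases "i < m")
      case False
      then have "S i = T (i - m)" "S (Suc i) = T (Suc (i - m))" "i - m < n"
        using Shi[of i] Shi[of "Suc i"] i by (auto simp: Suc_diff_le)
      then show ?thesis using Tf by simp
    next
      case True
      have e: "S i = U i \<inter> C1" "S (Suc i) = U (Suc i) \<inter> C1" using Slo True by auto
      have s1: "submodule (U i) R M" and s2: "submodule (U (Suc i)) R M" and ss: "U i \<subseteq> U (Suc i)"
        using Usub Uf True by auto
      define g where "g = (\<lambda>H. msum M H (U i))"
      have A: "intv R M (U i) (U (Suc i)) (g H)" if "intv R M (U i \<inter> C1) (U (Suc i) \<inter> C1) H" for H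
      proof -
        have h: "submodule H R M" "U i \<inter> C1 \<subseteq> H" "H \<subseteq> U (Suc i) \<inter> C1" using that unfolding intv_def by auto
        show ?thesis unfolding intv_def g_def
          using msum_sub[OF h(1) s1] msum_ge(2)[OF h(1) s1] msum_le[OF s2, of H "U i"] h(3) ss by blast
      qed
      have B: "H = K" if "intv R M (U i \<inter> C1) (U (Suc i) \<inter> C1) H" "intv R M (U i \<inter> C1) (U (Suc i) \<inter> C1) K" "g H = g K" for H K
      proof -
        have h: "submodule H R M" "U i \<inter> C1 \<subseteq> H" "H \<subseteq> C1" using that(1) unfolding intv_def by auto
        have k: "submodule K R M" "U i \<inter> C1 \<subseteq> K" "K \<subseteq> C1" using that(2) unfolding intv_def by auto
        have "H = msum M H (U i) \<inter> C1" by (rule modular2[OF h(1) s1 C1 h(2,3)])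
        also have "\<dots> = msum M K (U i) \<inter> C1" using that(3) unfolding g_def by simp
        also have "\<dots> = K" by (rule modular2[OF k(1) s1 C1 k(2,3), symmetric])
        finally show ?thesis .
      qed
      have gm: "g H \<subseteq> g K" if "H \<subseteq> K" for H K unfolding g_def using that by (rule msum_mono) simp
      have "acc (intv R M (U i) (U (Suc i))) \<Longrightarrow> acc (intv R M (U i \<inter> C1) (U (Suc i) \<inter> C1))"
        by (erule acc_transfer[where g = g]) (fact A, erule gm, fact B)
      moreover have "dcc (intv R M (U i) (U (Suc i))) \<Longrightarrow> dcc (intv R M (U i \<inter> C1) (U (Suc i) \<inter> C1))"
        by (erule dcc_transfer[where g = g]) (fact A, erule gm, fact B)
      ultimately show ?thesis unfolding e using ss Uf True by blast
    qed
  qed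
  ultimately show ?thesis unfolding rel_mmx_def by blast
qed


lemma lin_img_sub:
  assumes f: "lin R M f" and H: "submodule H R M"
  shows "submodule (f ` H) R M"
proof -
  note h = sub_facts[OF H]
  have fc: "\<And>a. a \<in> carrier M \<Longrightarrow> f a \<in> carrier M"
    and fa: "\<And>a b. a \<in> carrier M \<Longrightarrow> b \<in> carrier M \<Longrightarrow> f (a \<oplus>\<^bsub>M\<^esub> b) = f a \<oplus>\<^bsub>M\<^esub> f b"
    and fs: "\<And>r a. r \<in> carrier R \<Longrightarrow> a \<in> carrier M \<Longrightarrow> f (r \<odot>\<^bsub>M\<^esub> a) = r \<odot>\<^bsub>M\<^esub> f a"
    using f unfolding lin_def by auto
  have f0: "f \<zero>\<^bsub>M\<^esub> = \<zero>\<^bsub>M\<^esub>"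
  proof -
    have "f \<zero>\<^bsub>M\<^esub> = f \<zero>\<^bsub>M\<^esub> \<oplus>\<^bsub>M\<^esub> f \<zero>\<^bsub>M\<^esub>" using fa[of "\<zero>\<^bsub>M\<^esub>" "\<zero>\<^bsub>M\<^esub>"] by simp
    then show ?thesis using fc[of "\<zero>\<^bsub>M\<^esub>"] by (simp add: M.add.l_cancel_one')
  qed
  have fn: "f (\<ominus>\<^bsub>M\<^esub> a) = \<ominus>\<^bsub>M\<^esub> f a" if a: "a \<in> carrier M" for a
  proof -
    have "f (\<ominus>\<^bsub>M\<^esub> a) \<oplus>\<^bsub>M\<^esub> f a = \<zero>\<^bsub>M\<^esub>" using fa[of "\<ominus>\<^bsub>M\<^esub> a" a] a f0 by (simp add: M.l_neg)
    then show ?thesis using a fc by (simp add: M.minus_equality)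
  qed
  show ?thesis unfolding submodule_iff
  proof (intro conjI ballI)
    show "f ` H \<subseteq> carrier M" using fc h(6) by blast
    show "\<zero>\<^bsub>M\<^esub> \<in> f ` H" using f0 h(2) by (metis image_eqI)
  next
    fix a assume "a \<in> f ` H"
    then obtain x where x: "x \<in> H" "a = f x" by blast
    then show "\<ominus>\<^bsub>M\<^esub> a \<in> f ` H" using fn[of x] h(3,6) by (metis image_eqI)
  next
    fix a b assume "a \<in> f ` H" "b \<in> f ` H"
    then obtain x y where x: "x \<in> H" "a = f x" "y \<in> H" "b = f y" by blast
    then show "a \<oplus>\<^bsub>M\<^esub> b \<in> f ` H" using fa[of x y] h(4,6) by (metis image_eqI)
  next
    fix r a assume r: "r \<in> carrier R" and "a \<in> f ` H"
    then obtain x where x: "x \<in> H" "a = f x" by blast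
    then show "r \<odot>\<^bsub>M\<^esub> a \<in> f ` H" using fs[of r x] r h(5,6) by (metis image_eqI)
  qed
qed

lemma rel_mmx_img:
  assumes RC: "rel_mmx R M C" and f: "lin R M f" and g: "lin R M g"
    and gf: "\<And>a. a \<in> carrier M \<Longrightarrow> g (f a) = a" and fg: "\<And>a. a \<in> carrier M \<Longrightarrow> f (g a) = a"
  shows "rel_mmx R M (f ` C)"
proof -
  obtain n T where T0: "T 0 = C" and Tn: "T n = carrier M"
    and Tsub: "\<forall>i\<le>n. submodule (T i) R M"
    and Tf: "\<forall>i<n. T i \<subseteq> T (Suc i) \<and> (acc (intv R M (T i) (T (Suc i))) \<or> dcc (intv R M (T i) (T (Suc i))))"
    using RC unfolding rel_mmx_def by blast
  have gfs: "g ` (f ` H) = H" if "H \<subseteq> carrier M" for H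
  proof -
    have "g ` (f ` H) = (\<lambda>a. g (f a)) ` H" by (simp add: image_image)
    also have "\<dots> = H" using that gf by (auto intro!: image_eqI)
    finally show ?thesis .
  qed
  have fgs: "f ` (g ` H) = H" if "H \<subseteq> carrier M" for H
  proof -
    have "f ` (g ` H) = (\<lambda>a. f (g a)) ` H" by (simp add: image_image)
    also have "\<dots> = H" using that fg by (auto intro!: image_eqI)
    finally show ?thesis .
  qed
  have fc: "\<And>a. a \<in> carrier M \<Longrightarrow> f a \<in> carrier M" using f unfolding lin_def by auto
  define T' where "T' = (\<lambda>i. f ` T i)"
  have "T' 0 = f ` C" unfolding T'_def T0 ..
  moreover have "T' n = carrier M"
  proof
    show "T' n \<subseteq> carrier M" unfolding T'_def Tn using fc by blast
    have "carrier M = f ` (g ` carrier M)" using fgs[of "carrier M"] by simp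
    also have "\<dots> \<subseteq> f ` carrier M" using g unfolding lin_def by blast
    finally show "carrier M \<subseteq> T' n" unfolding T'_def Tn .
  qed
  moreover have "\<forall>i\<le>n. submodule (T' i) R M" unfolding T'_def using Tsub lin_img_sub[OF f] by blast
  moreover have "\<forall>i<n. T' i \<subseteq> T' (Suc i) \<and> (acc (intv R M (T' i) (T' (Suc i))) \<or> dcc (intv R M (T' i) (T' (Suc i))))"
  proof (intro allI impI)
    fix i assume i: "i < n"
    have s1: "submodule (T i) R M" and s2: "submodule (T (Suc i)) R M" and ss: "T i \<subseteq> T (Suc i)"
      using Tsub Tf i by auto
    have le: "T' i \<subseteq> T' (Suc i)" unfolding T'_def using ss by (rule image_mono)
    have A: "intv R M (T i) (T (Suc i)) (g ` H)" if "intv R M (T' i) (T' (Suc i)) H" for H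
    proof -
      have h: "submodule H R M" "f ` T i \<subseteq> H" "H \<subseteq> f ` T (Suc i)" using that unfolding intv_def T'_def by auto
      have "T i = g ` (f ` T i)" using gfs sub_facts(1)[OF s1] by simp
      also have "\<dots> \<subseteq> g ` H" using h(2) by (rule image_mono)
      finally have 1: "T i \<subseteq> g ` H" .
      have "g ` H \<subseteq> g ` (f ` T (Suc i))" using h(3) by (rule image_mono)
      also have "\<dots> = T (Suc i)" using gfs sub_facts(1)[OF s2] by simp
      finally have 2: "g ` H \<subseteq> T (Suc i)" .
      show ?thesis unfolding intv_def using lin_img_sub[OF g h(1)] 1 2 by blast
    qed
    have B: "H = K" if "intv R M (T' i) (T' (Suc i)) H" "intv R M (T' i) (T' (Suc i)) K" "g ` H = g ` K" for H K
    proof -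
      have "H \<subseteq> carrier M" "K \<subseteq> carrier M" using that(1,2) sub_facts(1) unfolding intv_def by auto
      then show ?thesis using fgs that(3) by metis
    qed
    have gm: "g ` H \<subseteq> g ` K" if "H \<subseteq> K" for H K using that by (rule image_mono)
    have "acc (intv R M (T i) (T (Suc i))) \<Longrightarrow> acc (intv R M (T' i) (T' (Suc i)))"
      by (erule acc_transfer[where g = "image g"]) (fact A, erule gm, fact B)
    moreover have "dcc (intv R M (T i) (T (Suc i))) \<Longrightarrow> dcc (intv R M (T' i) (T' (Suc i)))"
      by (erule dcc_transfer[where g = "image g"]) (fact A, erule gm, fact B)
    ultimately show "T' i \<subseteq> T' (Suc i) \<and> (acc (intv R M (T' i) (T' (Suc i))) \<or> dcc (intv R M (T' i) (T' (Suc i))))"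
      using le Tf i by blast
  qed
  ultimately show ?thesis unfolding rel_mmx_def by blast
qed


lemma lin_fix_sub:
  assumes f: "lin R M f"
  shows "submodule {a \<in> carrier M. f a = a} R M"
proof -
  have fc: "\<And>a. a \<in> carrier M \<Longrightarrow> f a \<in> carrier M"
    and fa: "\<And>a b. a \<in> carrier M \<Longrightarrow> b \<in> carrier M \<Longrightarrow> f (a \<oplus>\<^bsub>M\<^esub> b) = f a \<oplus>\<^bsub>M\<^esub> f b"
    and fs: "\<And>r a. r \<in> carrier R \<Longrightarrow> a \<in> carrier M \<Longrightarrow> f (r \<odot>\<^bsub>M\<^esub> a) = r \<odot>\<^bsub>M\<^esub> f a"
    using f unfolding lin_def by auto
  have f0: "f \<zero>\<^bsub>M\<^esub> = \<zero>\<^bsub>M\<^esub>"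
  proof -
    have "f \<zero>\<^bsub>M\<^esub> = f \<zero>\<^bsub>M\<^esub> \<oplus>\<^bsub>M\<^esub> f \<zero>\<^bsub>M\<^esub>" using fa[of "\<zero>\<^bsub>M\<^esub>" "\<zero>\<^bsub>M\<^esub>"] by simp
    then show ?thesis using fc[of "\<zero>\<^bsub>M\<^esub>"] by (simp add: M.add.l_cancel_one')
  qed
  have fn: "f (\<ominus>\<^bsub>M\<^esub> a) = \<ominus>\<^bsub>M\<^esub> f a" if a: "a \<in> carrier M" for a
  proof -
    have "f (\<ominus>\<^bsub>M\<^esub> a) \<oplus>\<^bsub>M\<^esub> f a = \<zero>\<^bsub>M\<^esub>" using fa[of "\<ominus>\<^bsub>M\<^esub> a" a] a f0 by (simp add: M.l_neg)
    then show ?thesis using a fc by (simp add: M.minus_equality)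
  qed
  show ?thesis unfolding submodule_iff using f0 fn fa fs by auto
qed

lemma rel_mmx_top: "rel_mmx R M (carrier M)"
proof -
  have "submodule (carrier M) R M" unfolding submodule_iff by auto
  then show ?thesis unfolding rel_mmx_def by (intro exI[of _ 0] exI[of _ "\<lambda>_. carrier M"]) simp
qed

end

theorem corollary2p4:
  assumes "ring R" and "group G" and "RG_module R G A act"
  shows "Coc_mmx R G A act \<lhd> G"
proof -
  have rm: "rmodule R A" and G: "group G"
    and ac: "\<And>x a. x \<in> carrier G \<Longrightarrow> a \<in> carrier A \<Longrightarrow> act a x \<in> carrier A"
    and aa: "\<And>x a b. x \<in> carrier G \<Longrightarrow> a \<in> carrier A \<Longrightarrow> b \<in> carrier A \<Longrightarrow> act (a \<oplus>\<^bsub>A\<^esub> b) x = act a x \<oplus>\<^bsub>A\<^esub> act b x"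
    and as: "\<And>x r a. x \<in> carrier G \<Longrightarrow> r \<in> carrier R \<Longrightarrow> a \<in> carrier A \<Longrightarrow> act (r \<odot>\<^bsub>A\<^esub> a) x = r \<odot>\<^bsub>A\<^esub> act a x"
    and a1: "\<And>a. a \<in> carrier A \<Longrightarrow> act a \<one>\<^bsub>G\<^esub> = a"
    and am: "\<And>x y a. x \<in> carrier G \<Longrightarrow> y \<in> carrier G \<Longrightarrow> a \<in> carrier A \<Longrightarrow> act (act a x) y = act a (x \<otimes>\<^bsub>G\<^esub> y)"
    using assms(3) unfolding RG_module_def by auto
  interpret A: rmod R A by (rule rmodule_rmod[OF rm])
  interpret G: group G by (rule G)
  define C where "C = (\<lambda>x. centr_mod A act x)"
  have lin: "lin R A (\<lambda>a. act a x)" if "x \<in> carrier G" for x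
    unfolding lin_def using that ac aa as by auto
  have Csub: "submodule (C x) R A" if "x \<in> carrier G" for x
    unfolding C_def centr_mod_def by (rule A.lin_fix_sub[OF lin[OF that]])
  have Cc: "C x \<subseteq> carrier A" for x unfolding C_def centr_mod_def by blast
  have Coc: "Coc_mmx R G A act = {x \<in> carrier G. rel_mmx R A (C x)}"
    unfolding Coc_mmx_def C_def using A.minimax_quot_iff Csub unfolding C_def by blast
  have mem: "x \<in> Coc_mmx R G A act \<longleftrightarrow> x \<in> carrier G \<and> rel_mmx R A (C x)" for x
    unfolding Coc by simp
  have sg: "subgroup (Coc_mmx R G A act) G"
  proof (rule G.subgroupI)
    show "Coc_mmx R G A act \<subseteq> carrier G" unfolding Coc by blast
    have "C \<one>\<^bsub>G\<^esub> = carrier A" unfolding C_def centr_mod_def using a1 by auto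
    then have "\<one>\<^bsub>G\<^esub> \<in> Coc_mmx R G A act" unfolding mem using A.rel_mmx_top by simp
    then show "Coc_mmx R G A act \<noteq> {}" by blast
  next
    fix x assume "x \<in> Coc_mmx R G A act"
    then have x: "x \<in> carrier G" "rel_mmx R A (C x)" unfolding mem by auto
    have "C x \<subseteq> C (inv\<^bsub>G\<^esub> x)"
    proof
      fix a assume a: "a \<in> C x"
      then have ac': "a \<in> carrier A" "act a x = a" unfolding C_def centr_mod_def by auto
      have "act a (inv\<^bsub>G\<^esub> x) = act (act a x) (inv\<^bsub>G\<^esub> x)" using ac' by simp
      also have "\<dots> = act a (x \<otimes>\<^bsub>G\<^esub> inv\<^bsub>G\<^esub> x)" by (rule am) (use x ac' in auto)
      also have "\<dots> = act a \<one>\<^bsub>G\<^esub>" using x by simp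
      also have "\<dots> = a" using ac' a1 by simp
      finally show "a \<in> C (inv\<^bsub>G\<^esub> x)" unfolding C_def centr_mod_def using ac' by simp
    qed
    then show "inv\<^bsub>G\<^esub> x \<in> Coc_mmx R G A act"
      unfolding mem using A.rel_mmx_mono[OF x(2) _ Csub] x by simp
  next
    fix x y assume "x \<in> Coc_mmx R G A act" "y \<in> Coc_mmx R G A act"
    then have x: "x \<in> carrier G" "rel_mmx R A (C x)" "y \<in> carrier G" "rel_mmx R A (C y)" unfolding mem by auto
    have "C x \<inter> C y \<subseteq> C (x \<otimes>\<^bsub>G\<^esub> y)"
    proof
      fix a assume "a \<in> C x \<inter> C y"
      then have ac': "a \<in> carrier A" "act a x = a" "act a y = a" unfolding C_def centr_mod_def by auto
      have "act a (x \<otimes>\<^bsub>G\<^esub> y) = act (act a x) y" by (rule am[symmetric]) (use x ac' in auto)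
      also have "\<dots> = a" using ac' by simp
      finally show "a \<in> C (x \<otimes>\<^bsub>G\<^esub> y)" unfolding C_def centr_mod_def using ac' by simp
    qed
    then show "x \<otimes>\<^bsub>G\<^esub> y \<in> Coc_mmx R G A act"
      unfolding mem using A.rel_mmx_mono[OF A.rel_mmx_inter[OF x(2) x(4)] _ Csub] x by simp
  qed
  show ?thesis
    unfolding G.normal_inv_iff
  proof (intro conjI sg ballI)
    fix g h assume g: "g \<in> carrier G" and "h \<in> Coc_mmx R G A act"
    then have h: "h \<in> carrier G" "rel_mmx R A (C h)" unfolding mem by auto
    have gi: "inv\<^bsub>G\<^esub> g \<in> carrier G" using g by simp
    have ghg: "g \<otimes>\<^bsub>G\<^esub> h \<otimes>\<^bsub>G\<^esub> inv\<^bsub>G\<^esub> g \<in> carrier G" using g h by simp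
    have gf: "act (act a (inv\<^bsub>G\<^esub> g)) g = a" if "a \<in> carrier A" for a
      using am[OF gi g that] g a1[OF that] by simp
    have fg: "act (act a g) (inv\<^bsub>G\<^esub> g) = a" if "a \<in> carrier A" for a
      using am[OF g gi that] g a1[OF that] by simp
    have img: "rel_mmx R A ((\<lambda>a. act a (inv\<^bsub>G\<^esub> g)) ` C h)"
      by (rule A.rel_mmx_img[OF h(2) lin[OF gi] lin[OF g] gf fg])
    have "(\<lambda>a. act a (inv\<^bsub>G\<^esub> g)) ` C h \<subseteq> C (g \<otimes>\<^bsub>G\<^esub> h \<otimes>\<^bsub>G\<^esub> inv\<^bsub>G\<^esub> g)"
    proof
      fix b assume "b \<in> (\<lambda>a. act a (inv\<^bsub>G\<^esub> g)) ` C h"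
      then obtain a where a: "a \<in> carrier A" "act a h = a" "b = act a (inv\<^bsub>G\<^esub> g)"
        unfolding C_def centr_mod_def by blast
      have e: "inv\<^bsub>G\<^esub> g \<otimes>\<^bsub>G\<^esub> (g \<otimes>\<^bsub>G\<^esub> h \<otimes>\<^bsub>G\<^esub> inv\<^bsub>G\<^esub> g) = h \<otimes>\<^bsub>G\<^esub> inv\<^bsub>G\<^esub> g"
        using g h by (simp add: G.m_assoc[symmetric])
      have "act b (g \<otimes>\<^bsub>G\<^esub> h \<otimes>\<^bsub>G\<^esub> inv\<^bsub>G\<^esub> g) = act a (inv\<^bsub>G\<^esub> g \<otimes>\<^bsub>G\<^esub> (g \<otimes>\<^bsub>G\<^esub> h \<otimes>\<^bsub>G\<^esub> inv\<^bsub>G\<^esub> g))"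
        using am[OF gi ghg a(1)] a(3) by simp
      also have "\<dots> = act a (h \<otimes>\<^bsub>G\<^esub> inv\<^bsub>G\<^esub> g)" unfolding e ..
      also have "\<dots> = act (act a h) (inv\<^bsub>G\<^esub> g)" using am[OF h(1) gi a(1)] by simp
      also have "\<dots> = b" using a by simp
      finally show "b \<in> C (g \<otimes>\<^bsub>G\<^esub> h \<otimes>\<^bsub>G\<^esub> inv\<^bsub>G\<^esub> g)"
        unfolding C_def centr_mod_def using a ac[OF gi a(1)] by simp
    qed
    then show "g \<otimes>\<^bsub>G\<^esub> h \<otimes>\<^bsub>G\<^esub> inv\<^bsub>G\<^esub> g \<in> Coc_mmx R G A act"
      unfolding mem using A.rel_mmx_mono[OF img _ Csub[OF ghg]] ghg by simp
  qed
qed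

end
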